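(* Let $G$ be a graph, let $X,Y$ be disjoint subsets of $V(G)$, and let $K_1,K_2$ be two minimal $X-Y$ separators. Let $K_1^t=K_1 \cap NR(G,Y,K_2)$, $K_1^b=(K_1 \setminus K_1^t) \setminus (K_1 \cap K_2)$, $K_2^t=K_2 \cap NR(G,Y,K_1)$, $K_2^b=(K_2 \setminus K_2^t) \setminus (K_1 \cap K_2)$, and let $Top(K_1,K_2)=K_1^t \cup K_2^t \cup (K_1 \cap K_2)$ and $Bottom(K_1,K_2)=K_1^b \cup K_2^b \cup (K_1 \cap K_2)$. Then both $Top(K_1,K_2)$ and $Bottom(K_1,K_2)$ are $X-Y$ separators. Moreover, $Bottom(K_1,K_2) \geq K_1$ and $Bottom(K_1,K_2) \geq K_2$.
   Context: $G$ is a finite undirected graph. For disjoint $X,Y \subseteq V(G)$, an $X-Y$ separator is a set $K \subseteq V(G) \setminus (X \cup Y)$ such that $G \setminus K$ (the subgraph induced by $V(G)\setminus K$) contains no path from a vertex of $X$ to a vertex of $Y$; it is minimal if it is minimal under inclusion. For disjoint $A,B \subseteq V(G)$, $NR(G,A,B)$ denotes the set of vertices of $G$ that are not reachable from $A$ in $G \setminus B$. For $X-Y$ separators $K,K'$, we write $K \geq K'$ if $NR(G,Y,K) \supseteq NR(G,Y,K')$. *)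

theory Defs
  imports Main
begin

text \<open>A finite undirected graph: finite vertex set V and a symmetric edge relation E on V
  (loops are irrelevant for reachability).\<close>

definition graph :: "'a set \<Rightarrow> ('a \<Rightarrow> 'a \<Rightarrow> bool) \<Rightarrow> bool" where
  "graph V E \<longleftrightarrow> finite V \<and> (\<forall>u v. E u v \<longrightarrow> u \<in> V \<and> v \<in> V) \<and> (\<forall>u v. E u v \<longrightarrow> E v u)"

inductive reach :: "'a set \<Rightarrow> ('a \<Rightarrow> 'a \<Rightarrow> bool) \<Rightarrow> 'a set \<Rightarrow> 'a \<Rightarrow> 'a \<Rightarrow> bool"
  for V E W where
  refl: "u \<in> V \<Longrightarrow> u \<in> W \<Longrightarrow> reach V E W u u"
| step: "reach V E W u v \<Longrightarrow> E v w \<Longrightarrow> w \<in> V \<Longrightarrow> w \<in> W \<Longrightarrow> reach V E W u w"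

definition separator :: "'a set \<Rightarrow> ('a \<Rightarrow> 'a \<Rightarrow> bool) \<Rightarrow> 'a set \<Rightarrow> 'a set \<Rightarrow> 'a set \<Rightarrow> bool" where
  "separator V E X Y K \<longleftrightarrow> K \<subseteq> V - (X \<union> Y) \<and>
     \<not> (\<exists>x\<in>X. \<exists>y\<in>Y. reach V E (V - K) x y)"

definition minimal_separator :: "'a set \<Rightarrow> ('a \<Rightarrow> 'a \<Rightarrow> bool) \<Rightarrow> 'a set \<Rightarrow> 'a set \<Rightarrow> 'a set \<Rightarrow> bool" where
  "minimal_separator V E X Y K \<longleftrightarrow> separator V E X Y K \<and>
     (\<forall>K'. K' \<subset> K \<longrightarrow> \<not> separator V E X Y K')"

definition NR :: "'a set \<Rightarrow> ('a \<Rightarrow> 'a \<Rightarrow> bool) \<Rightarrow> 'a set \<Rightarrow> 'a set \<Rightarrow> 'a set" where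
  "NR V E A B = {v \<in> V. \<not> (\<exists>a\<in>A. reach V E (V - B) a v)}"

text \<open>K \<ge> K' (w.r.t. X,Y): NR(G,Y,K) \<supseteq> NR(G,Y,K').\<close>
definition sep_ge :: "'a set \<Rightarrow> ('a \<Rightarrow> 'a \<Rightarrow> bool) \<Rightarrow> 'a set \<Rightarrow> 'a set \<Rightarrow> 'a set \<Rightarrow> bool" where
  "sep_ge V E Y K K' \<longleftrightarrow> NR V E Y K' \<subseteq> NR V E Y K"

definition Top :: "'a set \<Rightarrow> ('a \<Rightarrow> 'a \<Rightarrow> bool) \<Rightarrow> 'a set \<Rightarrow> 'a set \<Rightarrow> 'a set \<Rightarrow> 'a set" where
  "Top V E Y K1 K2 = (K1 \<inter> NR V E Y K2) \<union> (K2 \<inter> NR V E Y K1) \<union> (K1 \<inter> K2)"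

definition Bottom :: "'a set \<Rightarrow> ('a \<Rightarrow> 'a \<Rightarrow> bool) \<Rightarrow> 'a set \<Rightarrow> 'a set \<Rightarrow> 'a set \<Rightarrow> 'a set" where
  "Bottom V E Y K1 K2 =
     ((K1 - (K1 \<inter> NR V E Y K2)) - (K1 \<inter> K2)) \<union>
     ((K2 - (K2 \<inter> NR V E Y K1)) - (K1 \<inter> K2)) \<union> (K1 \<inter> K2)"

end

theory Submission
  imports Defs
begin

lemma reach_ends: "reach V E W u v \<Longrightarrow> u \<in> V \<and> u \<in> W \<and> v \<in> V \<and> v \<in> W"
  by (induction rule: reach.induct) auto

lemma reach_prepend:
  assumes "reach V E W v w" "E u v" "u \<in> V" "u \<in> W"
  shows "reach V E W u w"
  using assms
proof (induction rule: reach.induct)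
  case (refl u')
  then show ?case by (meson reach.refl reach.step)
next
  case (step u' v' w')
  then show ?case by (meson reach.step)
qed

lemma reach_sym:
  assumes g: "graph V E" and r: "reach V E W u v"
  shows "reach V E W v u"
  using r
proof (induction rule: reach.induct)
  case (refl u)
  then show ?case by (simp add: reach.refl)
next
  case (step u v w)
  have "E w v" using g step(2) unfolding graph_def by blast
  moreover have "w \<in> V" "w \<in> W" using step by auto
  ultimately show ?case using reach_prepend[OF step.IH] by blast
qed

lemma bottom_inv:
  assumes sep1: "separator V E X Y K1" and sep2: "separator V E X Y K2"
    and Y: "Y \<subseteq> V"
    and r: "reach V E (V - Bottom V E Y K1 K2) y v" and y: "y \<in> Y"
  shows "(\<exists>y\<in>Y. reach V E (V-K1) y v) \<and> (\<exists>y\<in>Y. reach V E (V-K2) y v)"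
  using r y
proof (induction rule: reach.induct)
  case (refl u)
  have "u \<notin> K1" "u \<notin> K2" using refl sep1 sep2 unfolding separator_def by blast+
  then show ?case using refl by (blast intro: reach.refl)
next
  case (step u v w)
  have ih: "(\<exists>y\<in>Y. reach V E (V-K1) y v) \<and> (\<exists>y\<in>Y. reach V E (V-K2) y v)"
    using step.IH step.prems by simp
  then obtain y1 y2 where h1: "y1 \<in> Y" "reach V E (V-K1) y1 v"
     and h2: "y2 \<in> Y" "reach V E (V-K2) y2 v" by blast
  have wB: "w \<notin> Bottom V E Y K1 K2" and wV: "w \<in> V" and Evw: "E v w" using step.hyps by auto
  show ?case
  proof (cases "w \<in> K1")
    case True
    then have "w \<notin> K2" using wB unfolding Bottom_def by blast
    then have r2: "reach V E (V-K2) y2 w" using reach.step[OF h2(2) Evw wV] wV by simp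
    then have "w \<notin> NR V E Y K2" using h2(1) unfolding NR_def by blast
    then have "w \<in> Bottom V E Y K1 K2" using True \<open>w \<notin> K2\<close> unfolding Bottom_def by blast
    then show ?thesis using wB by blast
  next
    case False
    then have r1: "reach V E (V-K1) y1 w" using reach.step[OF h1(2) Evw wV] wV by simp
    show ?thesis
    proof (cases "w \<in> K2")
      case True
      then have "w \<notin> NR V E Y K1" using h1(1) r1 unfolding NR_def by blast
      then have "w \<in> Bottom V E Y K1 K2" using True \<open>w \<notin> K1\<close> unfolding Bottom_def by blast
      then show ?thesis using wB by blast
    next
      case False
      then have "reach V E (V-K2) y2 w" using reach.step[OF h2(2) Evw wV] wV by simp
      then show ?thesis using r1 h1 h2 by blast
    qed
  qed
qed

lemma top_inv:
  assumes sep1: "separator V E X Y K1" and sep2: "separator V E X Y K2"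
    and Y: "Y \<subseteq> V"
    and r: "reach V E (V - Top V E Y K1 K2) y v" and y: "y \<in> Y"
  shows "(\<exists>y\<in>Y. reach V E (V-K1) y v) \<or> (\<exists>y\<in>Y. reach V E (V-K2) y v)"
  using r y
proof (induction rule: reach.induct)
  case (refl u)
  have "u \<notin> K1" "u \<notin> K2" using refl sep1 sep2 unfolding separator_def by blast+
  then show ?case using refl by (blast intro: reach.refl)
next
  case (step u v w)
  have ih: "(\<exists>y\<in>Y. reach V E (V-K1) y v) \<or> (\<exists>y\<in>Y. reach V E (V-K2) y v)"
    using step.IH step.prems by simp
  have wT: "w \<notin> Top V E Y K1 K2" and wV: "w \<in> V" and Evw: "E v w" using step.hyps by auto
  have c1: ?case if hh: "\<exists>y\<in>Y. reach V E (V-K1) y v"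
  proof -
    obtain y1 where h1: "y1 \<in> Y" "reach V E (V-K1) y1 v" using hh by blast
    show ?thesis
    proof (cases "w \<in> K1")
      case True
      then have "w \<notin> NR V E Y K2" using wT unfolding Top_def by blast
      then show ?thesis using wV unfolding NR_def by blast
    next
      case False
      then show ?thesis using reach.step[OF h1(2) Evw wV] h1(1) wV by auto
    qed
  qed
  have c2: ?case if hh: "\<exists>y\<in>Y. reach V E (V-K2) y v"
  proof -
    obtain y1 where h1: "y1 \<in> Y" "reach V E (V-K2) y1 v" using hh by blast
    show ?thesis
    proof (cases "w \<in> K2")
      case True
      then have "w \<notin> NR V E Y K1" using wT unfolding Top_def by blast
      then show ?thesis using wV unfolding NR_def by blast
    next
      case False
      then show ?thesis using reach.step[OF h1(2) Evw wV] h1(1) wV by auto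
    qed
  qed
  show ?case using ih c1 c2 by blast
qed

lemma noX:
  assumes g: "graph V E" and sep: "separator V E X Y K" and x: "x \<in> X" and y: "y \<in> Y"
    and r: "reach V E (V-K) y x"
  shows False
  using reach_sym[OF g r] sep x y unfolding separator_def by blast

theorem proposition2:
  fixes V :: "'a set" and E :: "'a \<Rightarrow> 'a \<Rightarrow> bool" and X Y K1 K2 :: "'a set"
  assumes "graph V E"
    and "X \<subseteq> V" and "Y \<subseteq> V" and "X \<inter> Y = {}"
    and "minimal_separator V E X Y K1"
    and "minimal_separator V E X Y K2"
  shows "separator V E X Y (Top V E Y K1 K2) \<and> separator V E X Y (Bottom V E Y K1 K2) \<and>
         sep_ge V E Y (Bottom V E Y K1 K2) K1 \<and> sep_ge V E Y (Bottom V E Y K1 K2) K2"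
proof -
  have s1: "separator V E X Y K1" and s2: "separator V E X Y K2"
    using assms(5,6) unfolding minimal_separator_def by auto
  have subT: "Top V E Y K1 K2 \<subseteq> K1 \<union> K2" unfolding Top_def by blast
  have subB: "Bottom V E Y K1 K2 \<subseteq> K1 \<union> K2" unfolding Bottom_def by blast
  have k: "K1 \<union> K2 \<subseteq> V - (X \<union> Y)" using s1 s2 unfolding separator_def by blast
  have T: "separator V E X Y (Top V E Y K1 K2)"
    unfolding separator_def
  proof
    show "Top V E Y K1 K2 \<subseteq> V - (X \<union> Y)" using subT k by blast
    show "\<not> (\<exists>x\<in>X. \<exists>y\<in>Y. reach V E (V - Top V E Y K1 K2) x y)"
    proof
      assume "\<exists>x\<in>X. \<exists>y\<in>Y. reach V E (V - Top V E Y K1 K2) x y"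
      then obtain x y where xy: "x \<in> X" "y \<in> Y" "reach V E (V - Top V E Y K1 K2) x y" by blast
      have "reach V E (V - Top V E Y K1 K2) y x" using reach_sym[OF assms(1) xy(3)] .
      from top_inv[OF s1 s2 assms(3) this xy(2)]
      show False using noX[OF assms(1) s1 xy(1)] noX[OF assms(1) s2 xy(1)] by metis
    qed
  qed
  have B: "separator V E X Y (Bottom V E Y K1 K2)"
    unfolding separator_def
  proof
    show "Bottom V E Y K1 K2 \<subseteq> V - (X \<union> Y)" using subB k by blast
    show "\<not> (\<exists>x\<in>X. \<exists>y\<in>Y. reach V E (V - Bottom V E Y K1 K2) x y)"
    proof
      assume "\<exists>x\<in>X. \<exists>y\<in>Y. reach V E (V - Bottom V E Y K1 K2) x y"
      then obtain x y where xy: "x \<in> X" "y \<in> Y" "reach V E (V - Bottom V E Y K1 K2) x y" by blast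
      have "reach V E (V - Bottom V E Y K1 K2) y x" using reach_sym[OF assms(1) xy(3)] .
      from bottom_inv[OF s1 s2 assms(3) this xy(2)]
      show False using noX[OF assms(1) s1 xy(1)] by metis
    qed
  qed
  have G1: "sep_ge V E Y (Bottom V E Y K1 K2) K1"
    unfolding sep_ge_def
  proof
    fix v assume v: "v \<in> NR V E Y K1"
    show "v \<in> NR V E Y (Bottom V E Y K1 K2)"
    proof (rule ccontr)
      assume "v \<notin> NR V E Y (Bottom V E Y K1 K2)"
      then obtain y where "y \<in> Y" "reach V E (V - Bottom V E Y K1 K2) y v"
        using v unfolding NR_def by blast
      from bottom_inv[OF s1 s2 assms(3) this(2) this(1)]
      have "\<exists>y\<in>Y. reach V E (V-K1) y v" by blast
      then show False using v unfolding NR_def by blast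
    qed
  qed
  have G2: "sep_ge V E Y (Bottom V E Y K1 K2) K2"
    unfolding sep_ge_def
  proof
    fix v assume v: "v \<in> NR V E Y K2"
    show "v \<in> NR V E Y (Bottom V E Y K1 K2)"
    proof (rule ccontr)
      assume "v \<notin> NR V E Y (Bottom V E Y K1 K2)"
      then obtain y where "y \<in> Y" "reach V E (V - Bottom V E Y K1 K2) y v"
        using v unfolding NR_def by blast
      from bottom_inv[OF s1 s2 assms(3) this(2) this(1)]
      have "\<exists>y\<in>Y. reach V E (V-K2) y v" by blast
      then show False using v unfolding NR_def by blast
    qed
  qed
  show ?thesis using T B G1 G2 by blast
qed

end
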